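(* Let $\gamma>0$, let $V\in C_{p,\gamma}^{0}(\mathbb{R})$ be real-valued, and $\lambda\in\mathbb{R}$. Suppose $\psi(x)=e^{\mathrm{i}kx}p(x)$, with $k\in\mathbb{C}$ and $p\in C^2_{p,\gamma}(\mathbb{R})$, is a bounded Bloch solution of $-\psi''+V\psi=\lambda\psi$ that has a zero. Then the quasimomentum is $k=\frac{n\pi}{\gamma}$ for some $n\in\mathbb{Z}$, and $\psi$ equals the product of a complex constant and a real-valued function $f$ that is $\gamma$-periodic or $\gamma$-anti-periodic ($f(x+\gamma)=f(x)$ for all $x$, or $f(x+\gamma)=-f(x)$ for all $x$).
   Context: $C_{p}^{0}(I)$: integrable piecewise-continuous functions on $I$ (finitely many discontinuities on each finite subinterval, one-sided improper integrals of $|f|$ converging at each discontinuity); $C_{p}^{l}(I)$: differentiable functions with derivative in $C_{p}^{l-1}(I)$; $C_{p,\gamma}^{l}(\mathbb{R})$: $\gamma$-periodic functions in $C_{p}^{l}(\mathbb{R})$. A Bloch solution is a solution of the form $e^{\mathrm{i}kx}p(x)$ with $p$ $\gamma$-periodic; $k$ is its quasimomentum. *)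

theory Defs
  imports "HOL-Analysis.Analysis"
begin

definition pc0 :: "(real \<Rightarrow> 'a::real_normed_vector) \<Rightarrow> bool" where
  "pc0 f \<longleftrightarrow>
     (\<forall>a b. finite {x \<in> {a..b}. \<not> isCont f x}) \<and>
     (\<forall>c. \<not> isCont f c \<longrightarrow>
        (\<exists>\<delta>>0. (\<forall>t\<in>{c<..c+\<delta>}. isCont f t) \<and>
           (\<exists>L. ((\<lambda>e. integral {c+e..c+\<delta>} (\<lambda>t. norm (f t))) \<longlongrightarrow> L) (at_right 0))) \<and>
        (\<exists>\<delta>>0. (\<forall>t\<in>{c-\<delta>..<c}. isCont f t) \<and>
           (\<exists>L. ((\<lambda>e. integral {c-\<delta>..c-e} (\<lambda>t. norm (f t))) \<longlongrightarrow> L) (at_right 0))))"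

fun pcl :: "nat \<Rightarrow> (real \<Rightarrow> 'a::real_normed_vector) \<Rightarrow> bool" where
  "pcl 0 f = pc0 f"
| "pcl (Suc l) f = (\<exists>f'. (\<forall>x. (f has_vector_derivative f' x) (at x)) \<and> pcl l f')"

definition pcl_per :: "real \<Rightarrow> nat \<Rightarrow> (real \<Rightarrow> 'a::real_normed_vector) \<Rightarrow> bool" where
  "pcl_per \<gamma> l f \<longleftrightarrow> pcl l f \<and> (\<forall>x. f (x + \<gamma>) = f x)"

definition solves_schroedinger :: "(real \<Rightarrow> real) \<Rightarrow> real \<Rightarrow> (real \<Rightarrow> complex) \<Rightarrow> bool" where
  "solves_schroedinger V lam \<psi> \<longleftrightarrow>
     (\<exists>\<psi>' \<psi>''. \<forall>x. (\<psi> has_vector_derivative \<psi>' x) (at x) \<and>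
                  (\<psi>' has_vector_derivative \<psi>'' x) (at x) \<and>
                  - \<psi>'' x + of_real (V x) * \<psi> x = of_real lam * \<psi> x)"

end

theory Submission
  imports Defs
begin


lemma gronwall_right:
  fixes w w' w'' V :: "real \<Rightarrow> real" and lam b \<delta> \<epsilon> B t :: real
  assumes d1: "\<And>x. (w has_real_derivative w' x) (at x)"
    and d2: "\<And>x. (w' has_real_derivative w'' x) (at x)"
    and eq: "\<And>x. w'' x = (V x - lam) * w x"
    and dpos: "\<delta> > 0" and epos: "\<epsilon> > 0"
    and cont: "\<And>x. x \<in> {b<..b+\<delta>} \<Longrightarrow> isCont V x"
    and bnd: "\<And>s. b < s \<Longrightarrow> s < b + \<epsilon> \<Longrightarrow> integral {s..b+\<delta>} (\<lambda>x. \<bar>V x\<bar>) \<le> B"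
    and w0: "w b = 0" and w'0: "w' b = 0"
    and t: "t \<in> {b<..b+\<delta>}"
  shows "w t = 0 \<and> w' t = 0"
proof -
  define E where "E x = (w x)\<^sup>2 + (w' x)\<^sup>2" for x
  define h where "h x = 1 + \<bar>lam\<bar> + \<bar>V x\<bar>" for x
  define K where "K = (1 + \<bar>lam\<bar>) * \<delta> + B"
  have hcont: "continuous_on {s..u} h" if "b < s" "u \<le> b + \<delta>" for s u
  proof -
    have "continuous_on {s..u} V"
      using that by (intro continuous_at_imp_continuous_on) (auto intro!: cont)
    then show ?thesis unfolding h_def by (intro continuous_intros)
  qed
  have hnn: "h x \<ge> 0" for x unfolding h_def by simp
  have claim1: "E t \<le> E s * exp (integral {s..t} h)" if s: "b < s" "s \<le> t" for s
  proof -
    define H where "H x = integral {s..x} h" for x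
    define F where "F x = E x * exp (- H x)" for x
    define F' where "F' x = ((2 * w x * w' x + 2 * w' x * w'' x) - h x * E x) * exp (- H x)" for x
    have hc: "continuous_on {s..t} h" using hcont[of s t] s t by auto
    have Fd: "(F has_derivative (*) (F' x)) (at x within {s..t})" if x: "x \<in> {s..t}" for x
    proof -
      have Hd: "(H has_real_derivative h x) (at x within {s..t})"
        unfolding H_def by (rule integral_has_real_derivative[OF hc x])
      have d1': "(w has_real_derivative w' x) (at x within {s..t})"
        using d1 has_field_derivative_at_within by blast
      have d2': "(w' has_real_derivative w'' x) (at x within {s..t})"
        using d2 has_field_derivative_at_within by blast
      have "(F has_real_derivative F' x) (at x within {s..t})"
        unfolding F_def F'_def E_def
        by (rule derivative_eq_intros d1' d2' Hd refl | simp)+ (simp add: algebra_simps power2_eq_square)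
      then show ?thesis by (simp add: has_field_derivative_def)
    qed
    obtain \<xi> where "\<xi> \<in> {s..t}" and xi: "F t - F s = F' \<xi> * (t - s)"
      using mvt_very_simple[OF s(2), of F "\<lambda>x. (*) (F' x)"] Fd by auto
    have "F' \<xi> \<le> 0"
    proof -
      have a: "2 * w \<xi> * w' \<xi> * (1 + (V \<xi> - lam)) \<le> h \<xi> * E \<xi>"
      proof -
        have "\<bar>2 * w \<xi> * w' \<xi>\<bar> \<le> E \<xi>" unfolding E_def
        proof -
          have "0 \<le> (\<bar>w \<xi>\<bar> - \<bar>w' \<xi>\<bar>)\<^sup>2" by simp
          then show "\<bar>2 * w \<xi> * w' \<xi>\<bar> \<le> (w \<xi>)\<^sup>2 + (w' \<xi>)\<^sup>2"
            by (simp add: abs_mult power2_diff)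
        qed
        moreover have "\<bar>1 + (V \<xi> - lam)\<bar> \<le> h \<xi>" unfolding h_def by linarith
        ultimately have "\<bar>2 * w \<xi> * w' \<xi> * (1 + (V \<xi> - lam))\<bar> \<le> E \<xi> * h \<xi>"
          by (simp add: abs_mult mult_mono')
        then show ?thesis by (simp add: mult.commute)
      qed
      have "2 * w \<xi> * w' \<xi> + 2 * w' \<xi> * w'' \<xi> - h \<xi> * E \<xi> \<le> 0"
        using a by (simp add: eq algebra_simps)
      then show ?thesis unfolding F'_def
        by (intro mult_nonpos_nonneg) auto
    qed
    then have "F t \<le> F s" using xi s by (smt (verit) mult_nonpos_nonneg)
    moreover have "H s = 0" unfolding H_def by simp
    ultimately have "E t * exp (- H t) \<le> E s" unfolding F_def by simp
    then show ?thesis unfolding H_def by (simp add: exp_minus field_simps)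
  qed
  have claim2: "integral {s..t} h \<le> K" if s: "b < s" "s < b + \<epsilon>" "s \<le> t" for s
  proof -
    have i1: "h integrable_on {s..b+\<delta>}" using hcont[of s "b+\<delta>"] s
      by (intro integrable_continuous_real) auto
    have i2: "h integrable_on {t..b+\<delta>}" using hcont[of t "b+\<delta>"] s t
      by (intro integrable_continuous_real) auto
    have cV: "continuous_on {s..b+\<delta>} V"
      using s by (intro continuous_at_imp_continuous_on) (auto intro!: cont)
    have i3: "(\<lambda>x. \<bar>V x\<bar>) integrable_on {s..b+\<delta>}"
      using cV by (intro integrable_continuous_real continuous_intros)
    have "integral {s..t} h + integral {t..b+\<delta>} h = integral {s..b+\<delta>} h"
      using s t i1 by (intro Henstock_Kurzweil_Integration.integral_combine) auto
    moreover have "integral {t..b+\<delta>} h \<ge> 0" using i2 hnn by (intro integral_nonneg) auto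
    moreover have "integral {s..b+\<delta>} h = integral {s..b+\<delta>} (\<lambda>x. 1 + \<bar>lam\<bar>) + integral {s..b+\<delta>} (\<lambda>x. \<bar>V x\<bar>)"
      unfolding h_def by (rule integral_add) (use i3 in auto)
    moreover have "integral {s..b+\<delta>} (\<lambda>x. 1 + \<bar>lam\<bar>) = (b + \<delta> - s) * (1 + \<bar>lam\<bar>)"
      using s t by simp
    moreover have "(b + \<delta> - s) * (1 + \<bar>lam\<bar>) \<le> \<delta> * (1 + \<bar>lam\<bar>)"
      using s by (intro mult_right_mono) auto
    moreover have "integral {s..b+\<delta>} (\<lambda>x. \<bar>V x\<bar>) \<le> B" using bnd s by auto
    ultimately show ?thesis unfolding K_def by (simp add: algebra_simps)
  qed
  have Enn: "E x \<ge> 0" for x unfolding E_def by simp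
  have ev: "\<forall>\<^sub>F s in at_right b. E t \<le> E s * exp K"
    unfolding eventually_at_right_field
  proof (intro exI[of _ "min t (b + \<epsilon>)"] conjI allI impI)
    show "b < min t (b + \<epsilon>)" using t epos by auto
    fix s assume "b < s" "s < min t (b + \<epsilon>)"
    then have "E t \<le> E s * exp (integral {s..t} h)" "integral {s..t} h \<le> K"
      using claim1 claim2 by auto
    then show "E t \<le> E s * exp K"
      by (meson Enn exp_le_cancel_iff mult_left_mono order_trans)
  qed
  have "isCont E b" unfolding E_def
    using DERIV_isCont[OF d1] DERIV_isCont[OF d2] by (intro continuous_intros) auto
  then have "(E \<longlongrightarrow> E b) (at_right b)"
    unfolding isCont_def by (rule tendsto_within_subset) auto
  then have "((\<lambda>s. E s * exp K) \<longlongrightarrow> 0) (at_right b)"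
    using w0 w'0 unfolding E_def by (auto intro: tendsto_mult_left_zero)
  then have "E t \<le> 0"
    using tendsto_le[OF _ _ tendsto_const ev] by simp
  then have "E t = 0" using Enn[of t] by simp
  then show ?thesis unfolding E_def by (simp add: sum_power2_eq_zero_iff)
qed


lemma pc0_right:
  fixes V :: "real \<Rightarrow> real"
  assumes "pc0 V"
  shows "\<exists>\<delta>>0. \<exists>\<epsilon>>0. \<exists>B. (\<forall>x\<in>{b<..b+\<delta>}. isCont V x) \<and>
           (\<forall>s. b < s \<and> s < b + \<epsilon> \<longrightarrow> integral {s..b+\<delta>} (\<lambda>x. \<bar>V x\<bar>) \<le> B)"
proof (cases "isCont V b")
  case False
  then obtain \<delta> L where d: "\<delta> > 0" "\<forall>t\<in>{b<..b+\<delta>}. isCont V t"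
    and L: "((\<lambda>e. integral {b+e..b+\<delta>} (\<lambda>t. norm (V t))) \<longlongrightarrow> L) (at_right 0)"
    using assms unfolding pc0_def by blast
  have "\<forall>\<^sub>F e in at_right 0. dist (integral {b+e..b+\<delta>} (\<lambda>t. norm (V t))) L < 1"
    using tendstoD[OF L, of 1] by simp
  then obtain c where c: "c > 0" "\<And>e. 0 < e \<Longrightarrow> e < c \<Longrightarrow> dist (integral {b+e..b+\<delta>} (\<lambda>t. norm (V t))) L < 1"
    unfolding eventually_at_right_field by auto
  show ?thesis
  proof (intro exI conjI allI impI)
    show "\<delta> > 0" "c > 0" using d c by auto
    show "\<forall>x\<in>{b<..b+\<delta>}. isCont V x" using d by auto
    fix s assume s: "b < s \<and> s < b + c"
    have "dist (integral {b+(s-b)..b+\<delta>} (\<lambda>t. norm (V t))) L < 1" using c(2)[of "s-b"] s by auto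
    then show "integral {s..b+\<delta>} (\<lambda>x. \<bar>V x\<bar>) \<le> L + 1" by (simp add: dist_real_def)
  qed
next
  case True
  define D where "D = {x \<in> {b..b+1}. \<not> isCont V x}"
  have "finite D" using assms unfolding pc0_def D_def by blast
  then obtain d where d: "d > 0" "\<And>x. x \<in> D \<Longrightarrow> x \<noteq> b \<Longrightarrow> d \<le> dist b x"
    using finite_set_avoid[of D b] by blast
  define \<delta> where "\<delta> = min 1 (d/2)"
  have dp: "\<delta> > 0" using d unfolding \<delta>_def by auto
  have cont: "isCont V x" if "x \<in> {b..b+\<delta>}" for x
  proof (rule ccontr)
    assume "\<not> isCont V x"
    then have "x \<noteq> b" using True by auto
    moreover have "x \<in> D" using that \<open>\<not> isCont V x\<close> unfolding D_def \<delta>_def by auto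
    ultimately have "d \<le> dist b x" using d by auto
    then show False using that d unfolding \<delta>_def dist_real_def by auto
  qed
  have cV: "continuous_on {b..b+\<delta>} (\<lambda>x. \<bar>V x\<bar>)"
    using cont by (intro continuous_at_imp_continuous_on continuous_intros) auto
  show ?thesis
  proof (intro exI conjI allI impI)
    show "\<delta> > 0" "(1::real) > 0" using dp by auto
    show "\<forall>x\<in>{b<..b+\<delta>}. isCont V x" using cont by auto
    fix s assume s: "b < s \<and> s < b + 1"
    show "integral {s..b+\<delta>} (\<lambda>x. \<bar>V x\<bar>) \<le> integral {b..b+\<delta>} (\<lambda>x. \<bar>V x\<bar>)"
    proof (cases "s \<le> b + \<delta>")
      case True
      have i: "(\<lambda>x. \<bar>V x\<bar>) integrable_on {b..b+\<delta>}" using cV by (rule integrable_continuous_real)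
      have "integral {b..s} (\<lambda>x. \<bar>V x\<bar>) + integral {s..b+\<delta>} (\<lambda>x. \<bar>V x\<bar>) = integral {b..b+\<delta>} (\<lambda>x. \<bar>V x\<bar>)"
        using s True i by (intro Henstock_Kurzweil_Integration.integral_combine) auto
      moreover have "integral {b..s} (\<lambda>x. \<bar>V x\<bar>) \<ge> 0"
        using s True by (intro integral_nonneg integrable_on_subinterval[OF i]) auto
      ultimately show ?thesis by simp
    next
      case False
      then show ?thesis using dp by (simp add: integral_nonneg integrable_continuous_real[OF cV])
    qed
  qed
qed


lemma pc0_left:
  fixes V :: "real \<Rightarrow> real"
  assumes "pc0 V"
  shows "\<exists>\<delta>>0. \<exists>\<epsilon>>0. \<exists>B. (\<forall>x\<in>{b-\<delta>..<b}. isCont V x) \<and>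
           (\<forall>s. b - \<epsilon> < s \<and> s < b \<longrightarrow> integral {b-\<delta>..s} (\<lambda>x. \<bar>V x\<bar>) \<le> B)"
proof (cases "isCont V b")
  case False
  then obtain \<delta> L where d: "\<delta> > 0" "\<forall>t\<in>{b-\<delta>..<b}. isCont V t"
    and L: "((\<lambda>e. integral {b-\<delta>..b-e} (\<lambda>t. norm (V t))) \<longlongrightarrow> L) (at_right 0)"
    using assms unfolding pc0_def by blast
  have "\<forall>\<^sub>F e in at_right 0. dist (integral {b-\<delta>..b-e} (\<lambda>t. norm (V t))) L < 1"
    using tendstoD[OF L, of 1] by simp
  then obtain c where c: "c > 0" "\<And>e. 0 < e \<Longrightarrow> e < c \<Longrightarrow> dist (integral {b-\<delta>..b-e} (\<lambda>t. norm (V t))) L < 1"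
    unfolding eventually_at_right_field by auto
  show ?thesis
  proof (intro exI conjI allI impI)
    show "\<delta> > 0" "c > 0" using d c by auto
    show "\<forall>x\<in>{b-\<delta>..<b}. isCont V x" using d by auto
    fix s assume s: "b - c < s \<and> s < b"
    have "dist (integral {b-\<delta>..b-(b-s)} (\<lambda>t. norm (V t))) L < 1" using c(2)[of "b-s"] s by auto
    then show "integral {b-\<delta>..s} (\<lambda>x. \<bar>V x\<bar>) \<le> L + 1" by (simp add: dist_real_def)
  qed
next
  case True
  define D where "D = {x \<in> {(b-1)..b}. \<not> isCont V x}"
  have "finite D" using assms unfolding pc0_def D_def by blast
  then obtain d where d: "d > 0" "\<And>x. x \<in> D \<Longrightarrow> x \<noteq> b \<Longrightarrow> d \<le> dist b x"
    using finite_set_avoid[of D b] by blast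
  define \<delta> where "\<delta> = min 1 (d/2)"
  have dp: "\<delta> > 0" using d unfolding \<delta>_def by auto
  have cont: "isCont V x" if "x \<in> {b-\<delta>..b}" for x
  proof (rule ccontr)
    assume "\<not> isCont V x"
    then have "x \<noteq> b" using True by auto
    moreover have "x \<in> D" using that \<open>\<not> isCont V x\<close> unfolding D_def \<delta>_def by auto
    ultimately have "d \<le> dist b x" using d by auto
    then show False using that d unfolding \<delta>_def dist_real_def by auto
  qed
  have cV: "continuous_on {b-\<delta>..b} (\<lambda>x. \<bar>V x\<bar>)"
    using cont by (intro continuous_at_imp_continuous_on continuous_intros) auto
  show ?thesis
  proof (intro exI conjI allI impI)
    show "\<delta> > 0" "(1::real) > 0" using dp by auto
    show "\<forall>x\<in>{b-\<delta>..<b}. isCont V x" using cont by auto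
    fix s assume s: "b - 1 < s \<and> s < b"
    show "integral {b-\<delta>..s} (\<lambda>x. \<bar>V x\<bar>) \<le> integral {b-\<delta>..b} (\<lambda>x. \<bar>V x\<bar>)"
    proof (cases "b - \<delta> \<le> s")
      case True
      have i: "(\<lambda>x. \<bar>V x\<bar>) integrable_on {b-\<delta>..b}" using cV by (rule integrable_continuous_real)
      have "integral {b-\<delta>..s} (\<lambda>x. \<bar>V x\<bar>) + integral {s..b} (\<lambda>x. \<bar>V x\<bar>) = integral {b-\<delta>..b} (\<lambda>x. \<bar>V x\<bar>)"
        using s True i by (intro Henstock_Kurzweil_Integration.integral_combine) auto
      moreover have "integral {s..b} (\<lambda>x. \<bar>V x\<bar>) \<ge> 0"
        using s True by (intro integral_nonneg integrable_on_subinterval[OF i]) auto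
      ultimately show ?thesis by simp
    next
      case False
      then show ?thesis using dp by (simp add: integral_nonneg integrable_continuous_real[OF cV])
    qed
  qed
qed

lemma ode_unique:
  fixes w w' w'' V :: "real \<Rightarrow> real" and lam a :: real
  assumes pc: "pc0 V"
    and d1: "\<And>x. (w has_real_derivative w' x) (at x)"
    and d2: "\<And>x. (w' has_real_derivative w'' x) (at x)"
    and eq: "\<And>x. w'' x = (V x - lam) * w x"
    and wa: "w a = 0" and w'a: "w' a = 0"
  shows "w x = 0"
proof -
  define S where "S = {x. w x = 0} \<inter> {x. w' x = 0}"
  have cw: "continuous_on UNIV w" "continuous_on UNIV w'"
    using DERIV_isCont[OF d1] DERIV_isCont[OF d2]
    by (auto intro!: continuous_at_imp_continuous_on)
  have "closed S" unfolding S_def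
    by (intro closed_Int closed_Collect_eq cw continuous_on_const)
  moreover have "open S"
    unfolding open_dist
  proof
    fix b assume "b \<in> S"
    then have wb: "w b = 0" "w' b = 0" unfolding S_def by auto
    obtain \<delta>1 \<epsilon>1 B1 where r: "\<delta>1 > 0" "\<epsilon>1 > 0" "\<forall>x\<in>{b<..b+\<delta>1}. isCont V x"
      "\<forall>s. b < s \<and> s < b + \<epsilon>1 \<longrightarrow> integral {s..b+\<delta>1} (\<lambda>x. \<bar>V x\<bar>) \<le> B1"
      using pc0_right[OF pc, of b] by blast
    obtain \<delta>2 \<epsilon>2 B2 where l: "\<delta>2 > 0" "\<epsilon>2 > 0" "\<forall>x\<in>{b-\<delta>2..<b}. isCont V x"
      "\<forall>s. b - \<epsilon>2 < s \<and> s < b \<longrightarrow> integral {b-\<delta>2..s} (\<lambda>x. \<bar>V x\<bar>) \<le> B2"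
      using pc0_left[OF pc, of b] by blast
    have R: "w t = 0 \<and> w' t = 0" if "t \<in> {b<..b+\<delta>1}" for t
      by (rule gronwall_right[OF d1 d2 eq r(1,2) _ _ wb that, of B1]) (use r in auto)
    define wr where "wr x = w (- x)" for x
    define wr' where "wr' x = - w' (- x)" for x
    define wr'' where "wr'' x = w'' (- x)" for x
    have e1: "(wr has_real_derivative wr' x) (at x)" for x
      unfolding wr_def wr'_def using DERIV_mirror[where f=w and x=x and y="w' (-x)"] d1 by simp
    have e2: "(wr' has_real_derivative wr'' x) (at x)" for x
      unfolding wr'_def wr''_def using DERIV_minus[OF iffD1[OF DERIV_mirror[where f=w' and x=x and y="w'' (-x)"]]] d2 by simp
    have e3: "wr'' x = ((\<lambda>x. V (-x)) x - lam) * wr x" for x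
      unfolding wr''_def wr_def by (rule eq)
    have L: "wr t = 0 \<and> wr' t = 0" if "t \<in> {-b<..-b+\<delta>2}" for t
    proof (rule gronwall_right[OF e1 e2 e3 l(1) l(2) _ _ _ _ that, of B2])
      fix x assume x: "x \<in> {-b<..-b+\<delta>2}"
      then have "isCont V (- x)" using l(3) by auto
      then show "isCont (\<lambda>x. V (- x)) x"
        using isCont_o2[where f=uminus and a=x and g=V] by (auto intro: continuous_intros)
    next
      fix s assume s: "- b < s" "s < - b + \<epsilon>2"
      have "integral {s..-b+\<delta>2} (\<lambda>x. \<bar>V (- x)\<bar>) = integral {b-\<delta>2..-s} (\<lambda>x. \<bar>V x\<bar>)"
        using Henstock_Kurzweil_Integration.integral_reflect_real[of "-s" "b-\<delta>2" "\<lambda>x. \<bar>V x\<bar>"] by simp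
      also have "\<dots> \<le> B2" using l(4) s by auto
      finally show "integral {s..-b+\<delta>2} (\<lambda>x. \<bar>V (- x)\<bar>) \<le> B2" .
    qed (use wb in \<open>auto simp: wr_def wr'_def\<close>)
    show "\<exists>e>0. \<forall>y. dist y b < e \<longrightarrow> y \<in> S"
    proof (intro exI[of _ "min \<delta>1 \<delta>2"] conjI allI impI)
      show "min \<delta>1 \<delta>2 > 0" using r l by auto
      fix y assume y: "dist y b < min \<delta>1 \<delta>2"
      consider "y > b" | "y = b" | "y < b" by linarith
      then show "y \<in> S"
      proof cases
        case 1 then show ?thesis using R[of y] y unfolding S_def dist_real_def by auto
      next
        case 2 then show ?thesis using wb unfolding S_def by auto
      next
        case 3 then show ?thesis using L[of "-y"] y unfolding S_def dist_real_def wr_def wr'_def by auto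
      qed
    qed
  qed
  moreover have "a \<in> S" using wa w'a unfolding S_def by auto
  ultimately have "S = UNIV" using clopen[of S] by auto
  then show ?thesis unfolding S_def by auto
qed

theorem theoremA12:
  fixes \<gamma> lam :: real and V :: "real \<Rightarrow> real" and k :: complex
    and p \<psi> :: "real \<Rightarrow> complex"
  assumes "\<gamma> > 0"
    and "pcl_per \<gamma> 0 V"
    and "pcl_per \<gamma> 2 p"
    and "\<psi> = (\<lambda>x. exp (\<i> * k * of_real x) * p x)"
    and "\<psi> \<noteq> (\<lambda>_. 0)"
    and "solves_schroedinger V lam \<psi>"
    and "bounded (range \<psi>)"
    and "\<exists>x0. \<psi> x0 = 0"
  shows "(\<exists>n::int. k = of_real (of_int n * pi / \<gamma>)) \<and>
         (\<exists>(c::complex) (f::real \<Rightarrow> real).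
            (\<forall>x. \<psi> x = c * of_real (f x)) \<and>
            ((\<forall>x. f (x + \<gamma>) = f x) \<or> (\<forall>x. f (x + \<gamma>) = - f x)))"
proof -
  have pc: "pc0 V" using assms(2) unfolding pcl_per_def by simp
  have pper: "p (x + \<gamma>) = p x" for x using assms(3) unfolding pcl_per_def by simp
  obtain \<psi>' \<psi>'' where sol: "\<And>x. (\<psi> has_vector_derivative \<psi>' x) (at x)"
      "\<And>x. (\<psi>' has_vector_derivative \<psi>'' x) (at x)"
      "\<And>x. - \<psi>'' x + of_real (V x) * \<psi> x = of_real lam * \<psi> x"
    using assms(6) unfolding solves_schroedinger_def by blast
  define \<mu> where "\<mu> = exp (\<i> * k * of_real \<gamma>)"
  have per: "\<psi> (x + \<gamma>) = \<mu> * \<psi> x" for x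
    unfolding assms(4) \<mu>_def using pper[of x]
    by (simp add: distrib_left exp_add)
  define u where "u x = Re (\<psi> x)" for x
  define v where "v x = Im (\<psi> x)" for x
  define u' where "u' x = Re (\<psi>' x)" for x
  define v' where "v' x = Im (\<psi>' x)" for x
  define u'' where "u'' x = Re (\<psi>'' x)" for x
  define v'' where "v'' x = Im (\<psi>'' x)" for x
  have du: "(u has_real_derivative u' x) (at x)" "(v has_real_derivative v' x) (at x)"
     "(u' has_real_derivative u'' x) (at x)" "(v' has_real_derivative v'' x) (at x)" for x
    unfolding u_def v_def u'_def v'_def u''_def v''_def
    using sol(1,2) by (auto intro: has_field_derivative_Re has_field_derivative_Im)
  have eq2: "\<psi>'' x = of_real (V x - lam) * \<psi> x" for x
    using sol(3)[of x] by (simp add: algebra_simps)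
  have equ: "u'' x = (V x - lam) * u x" "v'' x = (V x - lam) * v x" for x
    unfolding u''_def u_def v''_def v_def eq2 by simp_all
  define W where "W x = u x * v' x - u' x * v x" for x
  have dW: "(W has_real_derivative 0) (at x)" for x
  proof -
    show ?thesis
      unfolding W_def by (rule derivative_eq_intros du refl | simp)+ (simp add: equ algebra_simps)
  qed
  obtain x0 where x0: "\<psi> x0 = 0" using assms(8) by blast
  have W0: "W x = 0" for x
    using DERIV_isconst_all[of W x x0] dW x0 unfolding W_def u_def v_def by simp
  obtain a where a: "\<psi> a \<noteq> 0" using assms(5) by auto
  define N where "N = (u a)\<^sup>2 + (v a)\<^sup>2"
  have Npos: "N > 0" using a unfolding N_def u_def v_def
    by (simp add: complex_eq_iff sum_power2_gt_zero_iff)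
  define w where "w x = u a * v x - v a * u x" for x
  define w' where "w' x = u a * v' x - v a * u' x" for x
  define w'' where "w'' x = u a * v'' x - v a * u'' x" for x
  have rel: "u a * v x = v a * u x" for x
  proof -
    have "w x = 0"
    proof (rule ode_unique[OF pc, of w w' w'' lam a])
      show "(w has_real_derivative w' x) (at x)" for x
        unfolding w_def w'_def by (intro derivative_eq_intros du) (auto intro: du)
      show "(w' has_real_derivative w'' x) (at x)" for x
        unfolding w'_def w''_def by (intro derivative_eq_intros du) (auto intro: du)
      show "w'' x = (V x - lam) * w x" for x
        unfolding w''_def w_def by (simp add: equ algebra_simps)
      show "w a = 0" unfolding w_def by simp
      show "w' a = 0" using W0[of a] unfolding w'_def W_def by (simp add: algebra_simps)
    qed
    then show ?thesis unfolding w_def by simp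
  qed
  define f where "f x = u a * u x + v a * v x" for x
  define c where "c = \<psi> a / of_real N"
  have rep: "\<psi> x = c * of_real (f x)" for x
  proof -
    have "u a * f x = N * u x" unfolding f_def N_def
      using rel[of x] by (simp add: power2_eq_square algebra_simps)
    moreover have "v a * f x = N * v x" unfolding f_def N_def
      using rel[of x] by (simp add: power2_eq_square algebra_simps)
    ultimately show ?thesis unfolding c_def using Npos
      by (simp add: complex_eq_iff u_def v_def field_simps)
  qed
  have Imu: "Im \<mu> = 0"
  proof -
    have "u a * v (a + \<gamma>) = v a * u (a + \<gamma>)" by (rule rel)
    then have "Im \<mu> * N = 0" unfolding u_def v_def per N_def
      by (simp add: power2_eq_square algebra_simps)
    then show ?thesis using Npos by simp
  qed
  define r where "r = Re \<mu>"
  have mur: "\<mu> = of_real r" using Imu unfolding r_def by (simp add: complex_eq_iff)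
  have fper: "f (x + \<gamma>) = r * f x" for x
    unfolding f_def u_def v_def per mur by (simp add: algebra_simps)
  have rnz: "r \<noteq> 0" using mur unfolding \<mu>_def by (metis exp_not_eq_zero of_real_0)
  have pown: "\<psi> (x + of_nat n * \<gamma>) = of_real (r ^ n) * \<psi> x" for x n
  proof (induction n)
    case 0 then show ?case by simp
  next
    case (Suc n)
    have "\<psi> (x + of_nat (Suc n) * \<gamma>) = \<psi> ((x + of_nat n * \<gamma>) + \<gamma>)" by (simp add: algebra_simps)
    also have "\<dots> = of_real r * \<psi> (x + of_nat n * \<gamma>)" using per mur by simp
    finally show ?case using Suc by simp
  qed
  obtain M where M: "\<And>x. norm (\<psi> x) \<le> M" using assms(7) unfolding bounded_iff by auto
  have na: "norm (\<psi> a) > 0" using a by simp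
  have r1: "\<bar>r\<bar> = 1"
  proof (rule ccontr)
    assume ne: "\<bar>r\<bar> \<noteq> 1"
    show False
    proof (cases "\<bar>r\<bar> > 1")
      case True
      obtain n where n: "M / norm (\<psi> a) < \<bar>r\<bar> ^ n" using real_arch_pow[OF True] by blast
      have "norm (\<psi> (a + of_nat n * \<gamma>)) = \<bar>r\<bar> ^ n * norm (\<psi> a)"
        by (simp add: pown norm_mult norm_power)
      moreover have "M < \<bar>r\<bar> ^ n * norm (\<psi> a)" using n na by (simp add: field_simps)
      ultimately show False using M[of "a + of_nat n * \<gamma>"] by simp
    next
      case False
      then have r': "1 < 1 / \<bar>r\<bar>" using ne rnz by (simp add: field_simps)
      obtain n where n: "M / norm (\<psi> a) < (1 / \<bar>r\<bar>) ^ n" using real_arch_pow[OF r'] by blast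
      have "\<psi> a = of_real (r ^ n) * \<psi> (a - of_nat n * \<gamma>)"
        using pown[of "a - of_nat n * \<gamma>" n] by simp
      then have "norm (\<psi> a) = \<bar>r\<bar> ^ n * norm (\<psi> (a - of_nat n * \<gamma>))"
        by (metis norm_mult norm_of_real power_abs)
      also have "\<dots> \<le> \<bar>r\<bar> ^ n * M" using M by (intro mult_left_mono) auto
      finally have "norm (\<psi> a) \<le> \<bar>r\<bar> ^ n * M" .
      moreover have "M < (1 / \<bar>r\<bar>) ^ n * norm (\<psi> a)" using n na by (simp add: field_simps)
      moreover have "\<bar>r\<bar> ^ n > 0" using rnz by simp
      ultimately have "norm (\<psi> a) < \<bar>r\<bar> ^ n * ((1 / \<bar>r\<bar>) ^ n * norm (\<psi> a))"
        using mult_strict_left_mono[of M "(1 / \<bar>r\<bar>) ^ n * norm (\<psi> a)" "\<bar>r\<bar> ^ n"] by linarith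
      also have "\<dots> = norm (\<psi> a)" using rnz by (simp add: power_one_over field_simps)
      finally show False by simp
    qed
  qed
  have "\<mu> ^ 2 = 1" using r1 mur by (simp add: abs_if power2_eq_square split: if_splits)
  then have "exp (2 * (\<i> * k * of_real \<gamma>)) = 1"
    unfolding \<mu>_def by (metis exp_of_nat_mult of_nat_numeral)
  then obtain n :: int where n: "Re (2 * (\<i> * k * of_real \<gamma>)) = 0"
      "Im (2 * (\<i> * k * of_real \<gamma>)) = of_int (2 * n) * pi"
    unfolding exp_eq_1 by blast
  have "k = of_real (of_int n * pi / \<gamma>)"
    using n assms(1) by (simp add: complex_eq_iff field_simps)
  moreover have "(\<forall>x. f (x + \<gamma>) = f x) \<or> (\<forall>x. f (x + \<gamma>) = - f x)"
    using r1 fper by (cases "r \<ge> 0") auto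
  ultimately show ?thesis using rep by blast
qed

end
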